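(* If the duality gap is zero and $\lambda^{\star}$ is an optimal solution of the dual problem, then an optimal solution $x^\star$ of the primal problem can be computed by solving the following linear system with respect to $x^\star$: $\begin{bmatrix}H(\lambda^{\star}) \\ b^{\top} A\end{bmatrix} x^\star = \begin{bmatrix}A^{\top} b \\ \lambda_y^\star - b^{\top} b\end{bmatrix}$.
   Context: 3D pose graph optimization with $n$ poses $(t_i,R_i)$, first pose anchored to the identity. Let $r_i\in\mathbb{R}^9$ stack the rows of $R_i$, and let $x\in\mathbb{R}^{12(n-1)}$ stack $t_2,\dots,t_n,r_2,\dots,r_n$. The primal problem is $f^\star=\min_{x,y}\|Ax-by\|^2$ subject to $x^{\top}E_{iuv}x=1$ if $u=v$, $x^{\top}E_{iuv}x=0$ if $u\neq v$ ($u,v=1,2,3$, $i=1,\dots,n-1$), and $y^2=1$, where $A,b$ encode the anchored pose-graph cost and $E_{iuv}$ satisfies $x^{\top}E_{iuv}x=(R_i^{(u)})^{\top}R_i^{(v)}$. For multipliers $\lambda=(\{\lambda_{iuv}\},\lambda_y)$, $H(\lambda)=A^{\top}A-\sum_{i=1}^{n-1}\sum_{u,v=1}^3\lambda_{iuv}E_{iuv}$ and $M(\lambda)=\begin{bmatrix}H(\lambda)&-A^{\top}b\\-b^{\top}A&b^{\top}b-\lambda_y\end{bmatrix}$. The dual problem is the SDP $d^\star=\max_\lambda\sum_{i,u}\lambda_{iuu}+\lambda_y$ subject to $M(\lambda)\succeq 0$; the duality gap is $f^\star-d^\star$. *)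

theory Defs
  imports Complex_Main "Jordan_Normal_Form.Matrix"
begin

text \<open>Anchored 3D pose graph optimisation (SE-Sync style QCQP).
  There are n poses; the first one is the anchor.  The unknown vector x has
  dimension 12(n-1): first t_2,...,t_n (3(n-1) entries), then r_2,...,r_n,
  where r_i stacks the rows of R_i (9 entries each).
  Indices are 0-based: rotation blocks i < n-1, column indices u v < 3.\<close>

definition pg_dim :: "nat \<Rightarrow> nat" where
  "pg_dim n = 12 * (n - 1)"

definition rot_idx :: "nat \<Rightarrow> nat \<Rightarrow> nat \<Rightarrow> nat \<Rightarrow> nat" where
  "rot_idx n i a c = 3 * (n - 1) + 9 * i + 3 * a + c"

text \<open>E_{iuv}: the symmetric matrix with x^T E_{iuv} x = (R_i^(u))^T R_i^(v),
  R_i^(u) being the u-th column of R_i.\<close>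
definition E_mat :: "nat \<Rightarrow> nat \<Rightarrow> nat \<Rightarrow> nat \<Rightarrow> real mat" where
  "E_mat n i u v = mat (pg_dim n) (pg_dim n)
     (\<lambda>(p, q). (\<Sum>a<3. (if p = rot_idx n i a u \<and> q = rot_idx n i a v then 1/2 else 0)
                     + (if p = rot_idx n i a v \<and> q = rot_idx n i a u then 1/2 else 0)))"

definition primal_feasible :: "nat \<Rightarrow> real vec \<Rightarrow> real \<Rightarrow> bool" where
  "primal_feasible n x y \<longleftrightarrow> x \<in> carrier_vec (pg_dim n) \<and>
     (\<forall>i < n - 1. \<forall>u < 3. \<forall>v < 3.
        x \<bullet> (E_mat n i u v *\<^sub>v x) = (if u = v then 1 else 0)) \<and>
     y\<^sup>2 = 1"

definition primal_cost :: "real mat \<Rightarrow> real vec \<Rightarrow> real vec \<Rightarrow> real \<Rightarrow> real" where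
  "primal_cost A b x y = (let w = A *\<^sub>v x - y \<cdot>\<^sub>v b in w \<bullet> w)"

definition primal_value :: "nat \<Rightarrow> real mat \<Rightarrow> real vec \<Rightarrow> real" where
  "primal_value n A b = Inf {primal_cost A b x y | x y. primal_feasible n x y}"

definition primal_optimal :: "nat \<Rightarrow> real mat \<Rightarrow> real vec \<Rightarrow> real vec \<Rightarrow> real \<Rightarrow> bool" where
  "primal_optimal n A b x y \<longleftrightarrow> primal_feasible n x y \<and>
     (\<forall>x' y'. primal_feasible n x' y' \<longrightarrow> primal_cost A b x y \<le> primal_cost A b x' y')"

definition H_mat :: "nat \<Rightarrow> real mat \<Rightarrow> (nat \<Rightarrow> nat \<Rightarrow> nat \<Rightarrow> real) \<Rightarrow> real mat" where
  "H_mat n A lam = mat (pg_dim n) (pg_dim n) (\<lambda>(p, q).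
     (transpose_mat A * A) $$ (p, q) -
     (\<Sum>i<n - 1. \<Sum>u<3. \<Sum>v<3. lam i u v * E_mat n i u v $$ (p, q)))"

definition M_mat :: "nat \<Rightarrow> real mat \<Rightarrow> real vec \<Rightarrow> (nat \<Rightarrow> nat \<Rightarrow> nat \<Rightarrow> real) \<Rightarrow> real \<Rightarrow> real mat" where
  "M_mat n A b lam ly = (let c = transpose_mat A *\<^sub>v b in
     four_block_mat (H_mat n A lam)
       (mat (pg_dim n) 1 (\<lambda>(p, _). - (c $ p)))
       (mat 1 (pg_dim n) (\<lambda>(_, q). - (c $ q)))
       (mat 1 1 (\<lambda>_. b \<bullet> b - ly)))"

definition psd :: "real mat \<Rightarrow> bool" where
  "psd M \<longleftrightarrow> M \<in> carrier_mat (dim_row M) (dim_row M) \<and> transpose_mat M = M \<and>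
     (\<forall>v \<in> carrier_vec (dim_row M). v \<bullet> (M *\<^sub>v v) \<ge> 0)"

definition dual_objective :: "nat \<Rightarrow> (nat \<Rightarrow> nat \<Rightarrow> nat \<Rightarrow> real) \<Rightarrow> real \<Rightarrow> real" where
  "dual_objective n lam ly = (\<Sum>i<n - 1. \<Sum>u<3. lam i u u) + ly"

definition dual_feasible :: "nat \<Rightarrow> real mat \<Rightarrow> real vec \<Rightarrow> (nat \<Rightarrow> nat \<Rightarrow> nat \<Rightarrow> real) \<Rightarrow> real \<Rightarrow> bool" where
  "dual_feasible n A b lam ly \<longleftrightarrow> psd (M_mat n A b lam ly)"

definition dual_value :: "nat \<Rightarrow> real mat \<Rightarrow> real vec \<Rightarrow> real" where
  "dual_value n A b = Sup {dual_objective n lam ly | lam ly. dual_feasible n A b lam ly}"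

definition dual_optimal :: "nat \<Rightarrow> real mat \<Rightarrow> real vec \<Rightarrow> (nat \<Rightarrow> nat \<Rightarrow> nat \<Rightarrow> real) \<Rightarrow> real \<Rightarrow> bool" where
  "dual_optimal n A b lam ly \<longleftrightarrow> dual_feasible n A b lam ly \<and>
     (\<forall>lam' ly'. dual_feasible n A b lam' ly' \<longrightarrow> dual_objective n lam' ly' \<le> dual_objective n lam ly)"

end

theory Submission
  imports Defs "HOL-Analysis.Function_Topology"
begin


lemma mv_idx:
  assumes "G \<in> carrier_mat d e" "x \<in> carrier_vec e" "p < d"
  shows "(G *\<^sub>v x) $ p = (\<Sum>q<e. G $$ (p,q) * x $ q)"
  using assms by (auto simp: scalar_prod_def row_def atLeast0LessThan)

lemma dot_sum:
  assumes "y \<in> carrier_vec d"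
  shows "x \<bullet> y = (\<Sum>p<d. x $ p * y $ p)"
  using assms by (auto simp: scalar_prod_def atLeast0LessThan)

lemma qf_sum:
  assumes "x \<in> carrier_vec d" "G \<in> carrier_mat d d"
  shows "x \<bullet> (G *\<^sub>v x) = (\<Sum>p<d. x $ p * (\<Sum>q<d. G $$ (p,q) * x $ q))"
proof -
  have "x \<bullet> (G *\<^sub>v x) = (\<Sum>p<d. x $ p * (G *\<^sub>v x) $ p)"
    using assms by (intro dot_sum) auto
  also have "\<dots> = (\<Sum>p<d. x $ p * (\<Sum>q<d. G $$ (p,q) * x $ q))"
    using assms by (intro sum.cong refl) (simp del: index_mult_mat_vec add: mv_idx)
  finally show ?thesis .
qed

lemma E_carrier: "E_mat n i u v \<in> carrier_mat (pg_dim n) (pg_dim n)"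
  by (simp add: E_mat_def)

lemma delta2:
  fixes x :: "real vec"
  assumes "\<alpha> < N" "\<beta> < N"
  shows "(\<Sum>p<N. x $ p * (\<Sum>q<N. (if p = \<alpha> \<and> q = \<beta> then c else 0) * x $ q)) = c * x $ \<alpha> * x $ \<beta>"
proof -
  have e: "\<And>p q. (if p = \<alpha> \<and> q = \<beta> then c else 0) * x $ q = (if q = \<beta> then (if p = \<alpha> then c * x $ \<beta> else 0) else 0)"
    by auto
  have "\<And>p. (\<Sum>q<N. (if p = \<alpha> \<and> q = \<beta> then c else 0) * x $ q) = (if p = \<alpha> then c * x $ \<beta> else 0)"
    unfolding e using assms by (simp add: sum.delta)
  then have "(\<Sum>p<N. x $ p * (\<Sum>q<N. (if p = \<alpha> \<and> q = \<beta> then c else 0) * x $ q)) = (\<Sum>p<N. if p = \<alpha> then x $ \<alpha> * (c * x $ \<beta>) else 0)"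
    by (intro sum.cong) auto
  then show ?thesis using assms by (simp add: sum.delta)
qed

lemma E_qf:
  assumes x: "x \<in> carrier_vec (pg_dim n)" and i: "i < n - 1" and u: "u < 3" and v: "v < 3"
  shows "x \<bullet> (E_mat n i u v *\<^sub>v x) = (\<Sum>a<3. x $ (rot_idx n i a u) * x $ (rot_idx n i a v))"
proof -
  let ?N = "pg_dim n"
  have lt: "\<And>a c. a < 3 \<Longrightarrow> c < 3 \<Longrightarrow> rot_idx n i a c < ?N"
    using i by (auto simp: rot_idx_def pg_dim_def)
  have "x \<bullet> (E_mat n i u v *\<^sub>v x) = (\<Sum>p<?N. x $ p * (\<Sum>q<?N. E_mat n i u v $$ (p,q) * x $ q))"
    using x by (simp add: qf_sum E_carrier)
  also have "\<dots> = (\<Sum>p<?N. x $ p * (\<Sum>q<?N. (\<Sum>a<3. (if p = rot_idx n i a u \<and> q = rot_idx n i a v then 1/2 else 0)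
                     + (if p = rot_idx n i a v \<and> q = rot_idx n i a u then 1/2 else 0)) * x $ q))"
    by (intro sum.cong refl arg_cong2[where f="(*)"]) (auto simp: E_mat_def)
  also have "\<dots> = (\<Sum>a<3. (\<Sum>p<?N. x $ p * (\<Sum>q<?N. (if p = rot_idx n i a u \<and> q = rot_idx n i a v then 1/2 else 0) * x $ q))
       + (\<Sum>p<?N. x $ p * (\<Sum>q<?N. (if p = rot_idx n i a v \<and> q = rot_idx n i a u then 1/2 else 0) * x $ q)))"
    by (simp add: sum_distrib_left sum_distrib_right sum.distrib distrib_right distrib_left sum.swap[of _ "{..<?N}" "{..<3::nat}"])
  also have "\<dots> = (\<Sum>a<3. x $ (rot_idx n i a u) * x $ (rot_idx n i a v))"
    using lt u v by (simp add: delta2)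
  finally show ?thesis .
qed

lemma qf_lin:
  "(\<Sum>p<d. x p * (\<Sum>q<d. (\<Sum>k\<in>K. f k p q) * x q)) = (\<Sum>k\<in>K. (\<Sum>p<d. x p * (\<Sum>q<d. f k p q * (x q::real))))"
proof -
  have "(\<Sum>p<d. x p * (\<Sum>q<d. (\<Sum>k\<in>K. f k p q) * x q)) = (\<Sum>p<d. \<Sum>k\<in>K. x p * (\<Sum>q<d. f k p q * x q))"
  proof (intro sum.cong refl)
    fix p
    have "(\<Sum>q<d. (\<Sum>k\<in>K. f k p q) * x q) = (\<Sum>q<d. \<Sum>k\<in>K. f k p q * x q)"
      by (simp add: sum_distrib_right)
    also have "\<dots> = (\<Sum>k\<in>K. \<Sum>q<d. f k p q * x q)" by (rule sum.swap)
    finally show "x p * (\<Sum>q<d. (\<Sum>k\<in>K. f k p q) * x q) = (\<Sum>k\<in>K. x p * (\<Sum>q<d. f k p q * x q))"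
      by (simp add: sum_distrib_left)
  qed
  also have "\<dots> = (\<Sum>k\<in>K. (\<Sum>p<d. x p * (\<Sum>q<d. f k p q * x q)))" by (rule sum.swap)
  finally show ?thesis .
qed
lemma qf_scale:
  "(\<Sum>p<d. x p * (\<Sum>q<d. (c * f p q) * x q)) = (c::real) * (\<Sum>p<d. x p * (\<Sum>q<d. f p q * x q))"
  by (simp add: sum_distrib_left mult.assoc mult.left_commute)
lemma qf_diff:
  "(\<Sum>p<d. x p * (\<Sum>q<d. (f p q - g p q) * x q)) = (\<Sum>p<d. x p * (\<Sum>q<d. f p q * x q)) - (\<Sum>p<d. x p * (\<Sum>q<d. g p q * (x q::real)))"
  by (simp add: left_diff_distrib right_diff_distrib sum_subtractf)



lemma H_carrier: "H_mat n A lam \<in> carrier_mat (pg_dim n) (pg_dim n)"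
  by (simp add: H_mat_def)

lemma H_qf:
  fixes A :: "real mat"
  assumes A: "A \<in> carrier_mat m (pg_dim n)" and x: "x \<in> carrier_vec (pg_dim n)"
  shows "x \<bullet> (H_mat n A lam *\<^sub>v x) = (A *\<^sub>v x) \<bullet> (A *\<^sub>v x) -
     (\<Sum>i<n - 1. \<Sum>u<3. \<Sum>v<3. lam i u v * (x \<bullet> (E_mat n i u v *\<^sub>v x)))"
proof -
  let ?N = "pg_dim n"
  have AA: "transpose_mat A * A \<in> carrier_mat ?N ?N" using A by auto
  have "x \<bullet> (H_mat n A lam *\<^sub>v x) = (\<Sum>p<?N. x $ p * (\<Sum>q<?N. H_mat n A lam $$ (p,q) * x $ q))"
    by (rule qf_sum[OF x H_carrier])
  also have "\<dots> = (\<Sum>p<?N. x $ p * (\<Sum>q<?N. ((transpose_mat A * A) $$ (p, q) -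
     (\<Sum>i<n - 1. \<Sum>u<3. \<Sum>v<3. lam i u v * E_mat n i u v $$ (p, q))) * x $ q))"
    by (intro sum.cong refl arg_cong2[where f="(*)"]) (auto simp: H_mat_def)
  also have "\<dots> = x \<bullet> ((transpose_mat A * A) *\<^sub>v x) -
     (\<Sum>i<n - 1. \<Sum>u<3. \<Sum>v<3. lam i u v * (x \<bullet> (E_mat n i u v *\<^sub>v x)))"
    unfolding qf_diff qf_lin qf_scale qf_sum[OF x AA] qf_sum[OF x E_carrier] ..
  also have "x \<bullet> ((transpose_mat A * A) *\<^sub>v x) = (A *\<^sub>v x) \<bullet> (A *\<^sub>v x)"
  proof -
    have "x \<bullet> ((transpose_mat A * A) *\<^sub>v x) = x \<bullet> (transpose_mat A *\<^sub>v (A *\<^sub>v x))"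
      using A x by (subst assoc_mult_mat_vec[of _ _ m]) auto
    also have "\<dots> = (transpose_mat A *\<^sub>v (A *\<^sub>v x)) \<bullet> x"
      using A x by (intro comm_scalar_prod[of _ ?N]) auto
    also have "\<dots> = (A *\<^sub>v x) \<bullet> (A *\<^sub>v x)"
      using A x by (intro transpose_vec_mult_scalar) auto
    finally show ?thesis .
  qed
  finally show ?thesis .
qed

lemma c_dot:
  fixes A :: "real mat"
  assumes A: "A \<in> carrier_mat m (pg_dim n)" and x: "x \<in> carrier_vec (pg_dim n)" and b: "b \<in> carrier_vec m"
  shows "(transpose_mat A *\<^sub>v b) \<bullet> x = b \<bullet> (A *\<^sub>v x)"
  using A x b by (intro transpose_vec_mult_scalar) auto

lemma cost_expand:
  fixes A :: "real mat"
  assumes A: "A \<in> carrier_mat m (pg_dim n)" and x: "x \<in> carrier_vec (pg_dim n)" and b: "b \<in> carrier_vec m"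
  shows "primal_cost A b x y = (A *\<^sub>v x) \<bullet> (A *\<^sub>v x) - 2 * y * (b \<bullet> (A *\<^sub>v x)) + y\<^sup>2 * (b \<bullet> b)"
proof -
  have Ax: "A *\<^sub>v x \<in> carrier_vec m" using A x by auto
  have "primal_cost A b x y = (\<Sum>p<m. (A *\<^sub>v x - y \<cdot>\<^sub>v b) $ p * (A *\<^sub>v x - y \<cdot>\<^sub>v b) $ p)"
    unfolding primal_cost_def Let_def using Ax b by (intro dot_sum) auto
  also have "\<dots> = (\<Sum>p<m. ((A *\<^sub>v x) $ p - y * b $ p) * ((A *\<^sub>v x) $ p - y * b $ p))"
    using Ax b by (intro sum.cong refl) auto
  also have "\<dots> = (\<Sum>p<m. (A *\<^sub>v x) $ p * (A *\<^sub>v x) $ p) - 2 * y * (\<Sum>p<m. b $ p * (A *\<^sub>v x) $ p) + y\<^sup>2 * (\<Sum>p<m. b $ p * b $ p)"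
    by (simp add: algebra_simps power2_eq_square sum.distrib sum_subtractf sum_distrib_left)
  also have "\<dots> = (A *\<^sub>v x) \<bullet> (A *\<^sub>v x) - 2 * y * (b \<bullet> (A *\<^sub>v x)) + y\<^sup>2 * (b \<bullet> b)"
    using Ax b by (simp add: dot_sum[of _ m])
  finally show ?thesis .
qed

definition zvec :: "nat \<Rightarrow> real vec \<Rightarrow> real \<Rightarrow> real vec" where
  "zvec N x y = vec (N + 1) (\<lambda>p. if p < N then x $ p else y)"

lemma zvec_idx[simp]: "p < N + 1 \<Longrightarrow> zvec N x y $ p = (if p < N then x $ p else y)"
  and zvec_dim[simp]: "dim_vec (zvec N x y) = N + 1"
  and zvec_carrier: "zvec N x y \<in> carrier_vec (N+1)"
  by (auto simp: zvec_def)

lemma M_carrier: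
  "M_mat n A b lam ly \<in> carrier_mat (pg_dim n + 1) (pg_dim n + 1)"
  unfolding M_mat_def Let_def by (rule four_block_carrier_mat) (auto simp: H_mat_def)

lemma dimH[simp]: "dim_row (H_mat n A lam) = pg_dim n" "dim_col (H_mat n A lam) = pg_dim n"
  by (auto simp: H_mat_def)

lemma M_idx:
  assumes "p < pg_dim n + 1" "q < pg_dim n + 1"
  shows "M_mat n A b lam ly $$ (p,q) = (if p < pg_dim n then if q < pg_dim n then H_mat n A lam $$ (p,q)
     else - (transpose_mat A *\<^sub>v b) $ p else if q < pg_dim n then - (transpose_mat A *\<^sub>v b) $ q else b \<bullet> b - ly)"
  using assms unfolding M_mat_def Let_def by (subst index_mat_four_block) auto

lemma Mz_top:
  fixes A :: "real mat"
  assumes A: "A \<in> carrier_mat m (pg_dim n)" and x: "x \<in> carrier_vec (pg_dim n)" and b: "b \<in> carrier_vec m"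
    and p: "p < pg_dim n"
  shows "(M_mat n A b lam ly *\<^sub>v zvec (pg_dim n) x y) $ p = (H_mat n A lam *\<^sub>v x) $ p - y * (transpose_mat A *\<^sub>v b) $ p"
proof -
  let ?N = "pg_dim n"
  have "(M_mat n A b lam ly *\<^sub>v zvec ?N x y) $ p = (\<Sum>q<?N+1. M_mat n A b lam ly $$ (p,q) * zvec ?N x y $ q)"
    using p by (intro mv_idx[OF M_carrier]) (auto simp: zvec_def)
  also have "\<dots> = (\<Sum>q<?N. H_mat n A lam $$ (p,q) * x $ q) + (- (transpose_mat A *\<^sub>v b) $ p) * y"
    using p A b by (simp add: M_idx zvec_def)
  also have "(\<Sum>q<?N. H_mat n A lam $$ (p,q) * x $ q) = (H_mat n A lam *\<^sub>v x) $ p"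
    using p x by (simp del: index_mult_mat_vec add: mv_idx[OF H_carrier])
  finally show ?thesis by simp
qed

lemma Mz_bot:
  fixes A :: "real mat"
  assumes A: "A \<in> carrier_mat m (pg_dim n)" and x: "x \<in> carrier_vec (pg_dim n)" and b: "b \<in> carrier_vec m"
  shows "(M_mat n A b lam ly *\<^sub>v zvec (pg_dim n) x y) $ pg_dim n = - ((transpose_mat A *\<^sub>v b) \<bullet> x) + y * (b \<bullet> b - ly)"
proof -
  let ?N = "pg_dim n"
  have "(M_mat n A b lam ly *\<^sub>v zvec ?N x y) $ ?N = (\<Sum>q<?N+1. M_mat n A b lam ly $$ (?N,q) * zvec ?N x y $ q)"
    by (intro mv_idx[OF M_carrier]) (auto simp: zvec_def)
  also have "\<dots> = (\<Sum>q<?N. - (transpose_mat A *\<^sub>v b) $ q * x $ q) + (b \<bullet> b - ly) * y"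
    using A b by (simp add: M_idx zvec_def)
  also have "(\<Sum>q<?N. - (transpose_mat A *\<^sub>v b) $ q * x $ q) = - ((transpose_mat A *\<^sub>v b) \<bullet> x)"
    using x by (simp add: dot_sum[of _ ?N] sum_negf)
  finally show ?thesis by simp
qed

lemma zMz:
  fixes A :: "real mat"
  assumes A: "A \<in> carrier_mat m (pg_dim n)" and x: "x \<in> carrier_vec (pg_dim n)" and b: "b \<in> carrier_vec m"
  shows "zvec (pg_dim n) x y \<bullet> (M_mat n A b lam ly *\<^sub>v zvec (pg_dim n) x y) =
    primal_cost A b x y - (\<Sum>i<n - 1. \<Sum>u<3. \<Sum>v<3. lam i u v * (x \<bullet> (E_mat n i u v *\<^sub>v x))) - ly * y\<^sup>2"
proof -
  let ?N = "pg_dim n" and ?z = "zvec (pg_dim n) x y" and ?M = "M_mat n A b lam ly"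
  let ?c = "transpose_mat A *\<^sub>v b"
  have "?z \<bullet> (?M *\<^sub>v ?z) = (\<Sum>p<?N+1. ?z $ p * (?M *\<^sub>v ?z) $ p)"
    using M_carrier[of n A b lam ly] by (intro dot_sum) (auto simp: zvec_def)
  also have "\<dots> = (\<Sum>p<?N. x $ p * ((H_mat n A lam *\<^sub>v x) $ p - y * ?c $ p)) + y * (- (?c \<bullet> x) + y * (b \<bullet> b - ly))"
    using assms by (simp add: Mz_top Mz_bot del: zvec_idx add: zvec_idx[of _ "pg_dim n"])
  also have "(\<Sum>p<?N. x $ p * ((H_mat n A lam *\<^sub>v x) $ p - y * ?c $ p)) = x \<bullet> (H_mat n A lam *\<^sub>v x) - y * (?c \<bullet> x)"
  proof -
    have "(\<Sum>p<?N. x $ p * ((H_mat n A lam *\<^sub>v x) $ p - y * ?c $ p)) = (\<Sum>p<?N. x $ p * (H_mat n A lam *\<^sub>v x) $ p) - y * (\<Sum>p<?N. ?c $ p * x $ p)"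
      by (simp add: algebra_simps sum_subtractf sum_distrib_left)
    also have "\<dots> = x \<bullet> (H_mat n A lam *\<^sub>v x) - y * (?c \<bullet> x)"
      using x H_carrier[of n A lam] by (simp add: dot_sum[of _ ?N])
    finally show ?thesis .
  qed
  finally show ?thesis
    using assms by (simp add: H_qf[OF A x] c_dot[OF A x b] cost_expand[OF A x b] algebra_simps power2_eq_square)
qed



lemma quad_zero:
  fixes B C :: real
  assumes "\<And>t. 0 \<le> 2 * t * B + t\<^sup>2 * C" "0 \<le> C"
  shows "B = 0"
proof (rule ccontr)
  assume "B \<noteq> 0"
  define s where "s = C + 1"
  have s: "s > 0" using assms(2) by (simp add: s_def)
  define t where "t = - B / s"
  have ts: "t * s = - B" using s by (simp add: t_def)
  have "(2 * t * B + t\<^sup>2 * C) * s\<^sup>2 = 2 * B * (t * s) * s + (t * s)\<^sup>2 * C"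
    by (simp add: algebra_simps power2_eq_square)
  also have "\<dots> = B\<^sup>2 * (- C - 2)" unfolding ts by (simp add: s_def algebra_simps power2_eq_square)
  finally have e: "(2 * t * B + t\<^sup>2 * C) * s\<^sup>2 = B\<^sup>2 * (- C - 2)" .
  have "B\<^sup>2 * (- C - 2) < 0"
    using \<open>B \<noteq> 0\<close> assms(2) by (intro mult_pos_neg) auto
  then have "(2 * t * B + t\<^sup>2 * C) < 0" using e s
    by (metis mult_less_0_iff not_square_less_zero zero_less_power)
  then show False using assms(1)[of t] by linarith
qed

lemma dot_self_zero:
  fixes v :: "real vec"
  assumes "v \<in> carrier_vec d" "v \<bullet> v = 0"
  shows "v = 0\<^sub>v d"
proof (rule eq_vecI)
  have "(\<Sum>p<d. v $ p * v $ p) = 0" using assms by (simp add: dot_sum[of _ d])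
  then have "\<forall>p\<in>{..<d}. v $ p * v $ p = 0"
    by (subst sum_nonneg_eq_0_iff[symmetric]) auto
  then show "\<And>i. i < dim_vec (0\<^sub>v d) \<Longrightarrow> v $ i = 0\<^sub>v d $ i" by auto
  show "dim_vec v = dim_vec (0\<^sub>v d)" using assms by auto
qed

lemma psd_kernel:
  fixes M :: "real mat"
  assumes M: "M \<in> carrier_mat d d" and ps: "psd M" and z: "z \<in> carrier_vec d" and q: "z \<bullet> (M *\<^sub>v z) = 0"
  shows "M *\<^sub>v z = 0\<^sub>v d"
proof -
  have sym: "transpose_mat M = M" using ps by (simp add: psd_def)
  have nn: "\<And>v. v \<in> carrier_vec d \<Longrightarrow> 0 \<le> v \<bullet> (M *\<^sub>v v)" using ps M by (auto simp: psd_def)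
  let ?w = "M *\<^sub>v z"
  have w: "?w \<in> carrier_vec d" using M z by auto
  have symw: "z \<bullet> (M *\<^sub>v ?w) = ?w \<bullet> ?w"
  proof -
    have "z \<bullet> (M *\<^sub>v ?w) = (transpose_mat M *\<^sub>v z) \<bullet> ?w"
      using M z w by (intro transpose_vec_mult_scalar[symmetric]) auto
    then show ?thesis using sym by simp
  qed
  have "\<And>t. 0 \<le> 2 * t * (?w \<bullet> ?w) + t\<^sup>2 * (?w \<bullet> (M *\<^sub>v ?w))"
  proof -
    fix t :: real
    have zt: "z + t \<cdot>\<^sub>v ?w \<in> carrier_vec d" using z w by auto
    have Mzt: "M *\<^sub>v (z + t \<cdot>\<^sub>v ?w) = ?w + t \<cdot>\<^sub>v (M *\<^sub>v ?w)"
      using M z w by (simp add: mult_add_distrib_mat_vec mult_mat_vec)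
    have "(z + t \<cdot>\<^sub>v ?w) \<bullet> (M *\<^sub>v (z + t \<cdot>\<^sub>v ?w)) =
        z \<bullet> ?w + t * (z \<bullet> (M *\<^sub>v ?w)) + t * (?w \<bullet> ?w) + t * t * (?w \<bullet> (M *\<^sub>v ?w))"
      unfolding Mzt using M z w
      by (simp add: add_scalar_prod_distrib[of _ d] scalar_prod_add_distrib[of _ d] algebra_simps)
    then have "(z + t \<cdot>\<^sub>v ?w) \<bullet> (M *\<^sub>v (z + t \<cdot>\<^sub>v ?w)) = 2 * t * (?w \<bullet> ?w) + t\<^sup>2 * (?w \<bullet> (M *\<^sub>v ?w))"
      using q symw by (simp add: power2_eq_square)
    then show "0 \<le> 2 * t * (?w \<bullet> ?w) + t\<^sup>2 * (?w \<bullet> (M *\<^sub>v ?w))" using nn[OF zt] by simp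
  qed
  then have "?w \<bullet> ?w = 0" by (rule quad_zero) (rule nn[OF w])
  then show ?thesis by (rule dot_self_zero[OF w])
qed



definition dt :: "nat \<Rightarrow> (nat \<Rightarrow> real) \<Rightarrow> (nat \<Rightarrow> real) \<Rightarrow> real" where
  "dt m u v = (\<Sum>j<m. u j * v j)"

definition lin :: "nat \<Rightarrow> (nat \<Rightarrow> real) \<Rightarrow> (nat \<Rightarrow> nat \<Rightarrow> real) \<Rightarrow> nat \<Rightarrow> real" where
  "lin k s cs j = (\<Sum>i<k. s i * cs i j)"

definition appQ :: "nat \<Rightarrow> (nat \<Rightarrow> nat \<Rightarrow> real) \<Rightarrow> (nat \<Rightarrow> real) \<Rightarrow> nat \<Rightarrow> real" where
  "appQ m Q c j = (\<Sum>l<m. Q j l * c l)"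

lemma dt_cong: "(\<And>j. j < m \<Longrightarrow> u j = u' j) \<Longrightarrow> (\<And>j. j < m \<Longrightarrow> v j = v' j) \<Longrightarrow> dt m u v = dt m u' v'"
  by (simp add: dt_def)

lemma dt_sym: "dt m u v = dt m v u" by (simp add: dt_def mult.commute)

lemma dt_diff1: "dt m (\<lambda>j. u j - w j) v = dt m u v - dt m w v"
  by (simp add: dt_def left_diff_distrib sum_subtractf)
lemma dt_add1: "dt m (\<lambda>j. u j + w j) v = dt m u v + dt m w v"
  by (simp add: dt_def distrib_right sum.distrib)
lemma dt_scale1: "dt m (\<lambda>j. a * u j) v = a * dt m u v"
  by (simp add: dt_def sum_distrib_left mult.assoc)

lemma dt_lin: "dt m u (lin k s cs) = (\<Sum>i<k. s i * dt m u (cs i))"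
  by (simp add: dt_def lin_def sum_distrib_left sum.swap[of _ "{..<k}"] mult.left_commute)

lemma lin_Suc: "lin (Suc k) s cs j = lin k s cs j + s k * cs k j"
  by (simp add: lin_def)

lemma orth_lin:
  assumes "\<And>i. i < k \<Longrightarrow> dt m u (cs i) = 0"
  shows "dt m u (lin k s cs) = 0"
  using assms by (simp add: dt_lin)

lemma appQ_update:
  "appQ m (\<lambda>j l. Q j l + a j * a l / D) c j = appQ m Q c j + (dt m a c / D) * a j"
  by (simp add: appQ_def dt_def distrib_right sum.distrib sum_divide_distrib sum_distrib_left algebra_simps)

lemma proj_exists:
  fixes cs :: "nat \<Rightarrow> nat \<Rightarrow> real"
  shows "\<exists>Q. \<forall>c. (\<exists>s. \<forall>j<m. appQ m Q c j = lin k s cs j) \<and>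
              (\<forall>i<k. dt m (\<lambda>j. c j - appQ m Q c j) (cs i) = 0)"
proof (induction k)
  case 0
  show ?case by (rule exI[of _ "\<lambda>_ _. 0"]) (simp add: appQ_def lin_def)
next
  case (Suc k)
  then obtain Q where Q: "\<And>c. \<exists>s. \<forall>j<m. appQ m Q c j = lin k s cs j"
    and O: "\<And>c i. i < k \<Longrightarrow> dt m (\<lambda>j. c j - appQ m Q c j) (cs i) = 0" by blast
  have OL: "dt m (\<lambda>j. c j - appQ m Q c j) (lin k s cs) = 0" for c s
    by (rule orth_lin) (rule O)
  have OQ: "dt m (\<lambda>j. c j - appQ m Q c j) (appQ m Q e) = 0" for c e
  proof -
    obtain s where s: "\<forall>j<m. appQ m Q e j = lin k s cs j" using Q by blast
    have "dt m (\<lambda>j. c j - appQ m Q c j) (appQ m Q e) = dt m (\<lambda>j. c j - appQ m Q c j) (lin k s cs)"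
      using s by (intro dt_cong) auto
    then show ?thesis using OL by simp
  qed
  define a where "a = cs k"
  define a' where "a' = (\<lambda>j. a j - appQ m Q a j)"
  define D where "D = dt m a' a'"
  show ?case
  proof (cases "D = 0")
    case True
    have a'0: "a' j = 0" if "j < m" for j
    proof -
      have "(\<Sum>j<m. a' j * a' j) = 0" using True by (simp add: D_def dt_def)
      then have "\<forall>j\<in>{..<m}. a' j * a' j = 0"
        by (subst sum_nonneg_eq_0_iff[symmetric]) auto
      then show ?thesis using that by auto
    qed
    obtain sa where sa: "\<forall>j<m. appQ m Q a j = lin k sa cs j" using Q by blast
    have aeq: "a j = lin k sa cs j" if "j < m" for j
      using a'0[OF that] sa that by (simp add: a'_def)
    show ?thesis
    proof (rule exI[of _ Q], rule allI, rule conjI)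
      fix c
      obtain s where s: "\<forall>j<m. appQ m Q c j = lin k s cs j" using Q by blast
      show "\<exists>s. \<forall>j<m. appQ m Q c j = lin (Suc k) s cs j"
        by (rule exI[of _ "s(k := 0)"]) (simp add: lin_Suc s, simp add: lin_def)
      show "\<forall>i<Suc k. dt m (\<lambda>j. c j - appQ m Q c j) (cs i) = 0"
      proof (intro allI impI)
        fix i assume "i < Suc k"
        then consider "i < k" | "i = k" by linarith
        then show "dt m (\<lambda>j. c j - appQ m Q c j) (cs i) = 0"
        proof cases
          case 1 then show ?thesis by (rule O)
        next
          case 2
          have "dt m (\<lambda>j. c j - appQ m Q c j) (cs i) = dt m (\<lambda>j. c j - appQ m Q c j) (lin k sa cs)"
            using aeq 2 by (intro dt_cong) (auto simp: a_def)
          then show ?thesis using OL by simp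
        qed
      qed
    qed
  next
    case False
    define Q' where "Q' = (\<lambda>j l. Q j l + a' j * a' l / D)"
    have Q'c: "appQ m Q' c j = appQ m Q c j + (dt m a' c / D) * a' j" for c j
      unfolding Q'_def by (rule appQ_update)
    obtain sa where sa: "\<forall>j<m. appQ m Q a j = lin k sa cs j" using Q by blast
    show ?thesis
    proof (rule exI[of _ Q'], rule allI, rule conjI)
      fix c
      obtain s where s: "\<forall>j<m. appQ m Q c j = lin k s cs j" using Q by blast
      define \<alpha> where "\<alpha> = dt m a' c / D"
      show "\<exists>s. \<forall>j<m. appQ m Q' c j = lin (Suc k) s cs j"
      proof (rule exI[of _ "(\<lambda>i. s i - \<alpha> * sa i)(k := \<alpha>)"], intro allI impI)
        fix j assume j: "j < m"
        have "lin (Suc k) ((\<lambda>i. s i - \<alpha> * sa i)(k := \<alpha>)) cs j = lin k (\<lambda>i. s i - \<alpha> * sa i) cs j + \<alpha> * a j"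
          by (simp add: lin_Suc a_def lin_def)
        also have "lin k (\<lambda>i. s i - \<alpha> * sa i) cs j = lin k s cs j - \<alpha> * lin k sa cs j"
          by (simp add: lin_def left_diff_distrib sum_subtractf sum_distrib_left mult.assoc)
        finally have L: "lin (Suc k) ((\<lambda>i. s i - \<alpha> * sa i)(k := \<alpha>)) cs j = lin k s cs j - \<alpha> * lin k sa cs j + \<alpha> * a j" .
        have e1: "appQ m Q' c j = appQ m Q c j + \<alpha> * (a j - appQ m Q a j)"
          by (simp only: Q'c \<alpha>_def a'_def)
        show "appQ m Q' c j = lin (Suc k) ((\<lambda>i. s i - \<alpha> * sa i)(k := \<alpha>)) cs j"
          unfolding e1 L using s sa j by (simp add: algebra_simps)
      qed
      have ortha'_i: "dt m a' (cs i) = 0" if "i < k" for i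
        unfolding a'_def by (rule O[OF that])
      show "\<forall>i<Suc k. dt m (\<lambda>j. c j - appQ m Q' c j) (cs i) = 0"
      proof (intro allI impI)
        fix i assume "i < Suc k"
        have split: "dt m (\<lambda>j. c j - appQ m Q' c j) (cs i) = dt m (\<lambda>j. c j - appQ m Q c j) (cs i) - \<alpha> * dt m a' (cs i)"
        proof -
          have "dt m (\<lambda>j. c j - appQ m Q' c j) (cs i) = dt m (\<lambda>j. (c j - appQ m Q c j) - \<alpha> * a' j) (cs i)"
            by (simp add: Q'c \<alpha>_def algebra_simps)
          then show ?thesis by (simp only: dt_diff1 dt_scale1)
        qed
        from \<open>i < Suc k\<close> consider "i < k" | "i = k" by linarith
        then show "dt m (\<lambda>j. c j - appQ m Q' c j) (cs i) = 0"
        proof cases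
          case 1 then show ?thesis using split O[OF 1] ortha'_i[OF 1] by simp
        next
          case 2
          have ca: "dt m (\<lambda>j. c j - appQ m Q c j) a = dt m a' c"
          proof -
            have "dt m (\<lambda>j. c j - appQ m Q c j) a = dt m (\<lambda>j. c j - appQ m Q c j) (\<lambda>j. a' j + appQ m Q a j)"
              by (simp add: a'_def)
            also have "\<dots> = dt m (\<lambda>j. a' j + appQ m Q a j) (\<lambda>j. c j - appQ m Q c j)" by (rule dt_sym)
            also have "\<dots> = dt m a' (\<lambda>j. c j - appQ m Q c j) + dt m (appQ m Q a) (\<lambda>j. c j - appQ m Q c j)" by (rule dt_add1)
            also have "dt m (appQ m Q a) (\<lambda>j. c j - appQ m Q c j) = 0"
              using OQ[of c a] dt_sym[of m "appQ m Q a"] by simp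
            also have "dt m a' (\<lambda>j. c j - appQ m Q c j) = dt m (\<lambda>j. c j - appQ m Q c j) a'" by (rule dt_sym)
            also have "dt m (\<lambda>j. c j - appQ m Q c j) a' + 0 = dt m c a' - dt m (appQ m Q c) a'" by (simp add: dt_diff1)
            also have "dt m (appQ m Q c) a' = 0"
              using OQ[of a c] dt_sym[of m "appQ m Q c" a'] by (simp add: a'_def)
            finally show ?thesis by (simp add: dt_sym[of m c])
          qed
          have aa: "dt m a' a = D"
          proof -
            have "dt m a' a = dt m a' (\<lambda>j. a' j + appQ m Q a j)" by (simp add: a'_def)
            also have "\<dots> = dt m (\<lambda>j. a' j + appQ m Q a j) a'" by (rule dt_sym)
            also have "\<dots> = dt m a' a' + dt m (appQ m Q a) a'" by (rule dt_add1)
            also have "\<dots> = D + dt m a' (appQ m Q a)" by (simp only: D_def dt_sym[of m "appQ m Q a"])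
            also have "dt m a' (appQ m Q a) = 0" using OQ[of a a] by (simp add: a'_def)
            finally show ?thesis by simp
          qed
          have "dt m a' (cs i) = D" using aa 2 by (simp add: a_def)
          moreover have "dt m (\<lambda>j. c j - appQ m Q c j) (cs i) = dt m a' c" using ca 2 by (simp add: a_def)
          ultimately show ?thesis using split False by (simp add: \<alpha>_def)
        qed
      qed
    qed
  qed
qed



lemma coord_cont[continuous_intros]: "continuous_on S (\<lambda>r::nat \<Rightarrow> real. r p)"
  by (rule continuous_on_subset[OF continuous_on_product_coordinates]) auto

lemma compact_box: "compact (PiE UNIV (\<lambda>p::nat. if p < R then {-1..1::real} else {0}))"
proof -
  have "compactin (product_topology (\<lambda>_. euclidean) UNIV) (PiE UNIV (\<lambda>p::nat. if p < R then {-1..1::real} else {0}))"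
    by (subst compactin_PiE) auto
  then show ?thesis by (simp add: euclidean_product_topology compactin_euclidean_iff)
qed

thm compact_Int_closed continuous_attains_inf closed_Collect_eq closed_Collect_all closed_Collect_conj closed_Collect_imp



lemma sum_split_add: "(\<Sum>p<T+R. f p) = (\<Sum>p<T. f p) + (\<Sum>p<R. f (T + p :: nat))"
  by (induction R) (auto simp: add.assoc)

lemma idx_dec:
  fixes i a u :: nat
  assumes a: "a < 3" and u: "u < 3"
  shows "(9*i+3*a+u) mod 9 div 3 = a" "(9*i+3*a+u) mod 3 = u" "(9*i+3*a+u) div 9 = i"
proof -
  have l: "3*a+u < 9" using assms by linarith
  have e1: "9*i+3*a+u = (3*a+u) + 9 * i" by simp
  have m9: "(9*i+3*a+u) mod 9 = 3*a+u"
    unfolding e1 using l by (simp only: mod_mult_self2) simp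
  have d3: "(u + 3 * a) div 3 = a" using u by (simp only: div_mult_self2)
  show "(9*i+3*a+u) mod 9 div 3 = a" unfolding m9 using d3 by (simp add: add.commute)
  have e2: "9*i+3*a+u = u + 3 * (a + 3 * i)" by simp
  show "(9*i+3*a+u) mod 3 = u" unfolding e2 using u by (simp only: mod_mult_self2) simp
  show "(9*i+3*a+u) div 9 = i" unfolding e1 using l by (simp add: div_mult_self2)
qed
lemma idx_rep:
  fixes p :: nat
  shows "p = 9 * (p div 9) + 3 * (p mod 9 div 3) + p mod 3" "p mod 9 div 3 < 3" "p mod 3 < 3"
proof -
  have e1: "9*(p div 9) + p mod 9 = p" by simp
  have e2: "p mod 9 = 3 * (p mod 9 div 3) + p mod 9 mod 3" by simp
  have e3: "p mod 9 mod 3 = p mod 3" by (simp add: mod_mod_cancel)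
  show "p = 9 * (p div 9) + 3 * (p mod 9 div 3) + p mod 3" using e1 e2 e3 by linarith
  show "p mod 9 div 3 < 3" by simp
  show "p mod 3 < 3" by simp
qed

definition Cset :: "nat \<Rightarrow> (nat \<Rightarrow> real) set" where
  "Cset n = {r. \<forall>i<n - 1. \<forall>u<3. \<forall>v<3. (\<Sum>a<3. r (9*i+3*a+u) * r (9*i+3*a+v)) = (if u = v then 1 else 0)}"

definition bx :: "nat \<Rightarrow> nat \<Rightarrow> real set" where
  "bx R p = (if p < R then {-1..1} else {0})"

definition Kset :: "nat \<Rightarrow> (nat \<Rightarrow> real) set" where
  "Kset n = PiE UNIV (bx (9 * (n - 1))) \<inter> Cset n"

lemma closed_Cset: "closed (Cset n)"
proof -
  have "Cset n = (\<Inter>i\<in>{..<n-1}. \<Inter>u\<in>{..<3::nat}. \<Inter>v\<in>{..<3::nat}.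
     {r. (\<Sum>a<3. r (9*i+3*a+u) * r (9*i+3*a+v)) = (if u = v then 1 else 0)})"
    by (auto simp: Cset_def)
  also have "closed \<dots>"
    by (intro closed_INT ballI closed_Collect_eq continuous_intros)
  finally show ?thesis .
qed

lemma compact_Kset: "compact (Kset n)"
proof -
  have "compact (PiE UNIV (bx (9 * (n - 1))))"
    using compact_box[of "9 * (n - 1)"] by (simp add: bx_def[abs_def])
  then show ?thesis unfolding Kset_def by (intro compact_Int_closed closed_Cset)
qed

lemma Cset_bound:
  assumes r: "r \<in> Cset n" and p: "p < 9 * (n - 1)"
  shows "r p \<in> {-1..1}"
proof -
  define i where "i = p div 9"
  define a where "a = p mod 9 div 3"
  define u where "u = p mod 3"
  have pe: "p = 9*i+3*a+u" and a: "a < 3" and u: "u < 3" using idx_rep[of p] by (auto simp: i_def a_def u_def)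
  have i: "i < n - 1" using p by (simp add: i_def less_mult_imp_div_less mult.commute)
  have s1: "(\<Sum>a'<3. r (9*i+3*a'+u) * r (9*i+3*a'+u)) = 1" using r i u by (auto simp: Cset_def)
  have "r p * r p \<le> (\<Sum>a'<3. r (9*i+3*a'+u) * r (9*i+3*a'+u))"
    unfolding pe using a by (intro member_le_sum) auto
  then have "(r p)\<^sup>2 \<le> 1" using s1 by (simp add: power2_eq_square)
  then have "\<bar>r p\<bar> \<le> 1" by (simp add: abs_square_le_1)
  then show ?thesis by (simp add: abs_le_iff)
qed

lemma Kset_nonempty: "Kset n \<noteq> {}"
proof -
  define r0 where "r0 = (\<lambda>p. if p < 9 * (n - 1) \<and> p mod 9 div 3 = p mod 3 then 1 else (0::real))"
  have "r0 \<in> Cset n"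
  proof -
    have "(\<Sum>a<3. r0 (9*i+3*a+u) * r0 (9*i+3*a+v)) = (if u = v then 1 else 0)"
      if i: "i < n - 1" and u: "u < 3" and v: "v < 3" for i u v
    proof -
      have lt: "9*i+3*a+w < 9 * (n - 1)" if "a < 3" "w < 3" for a w
        using i that by linarith
      have "(\<Sum>a<3. r0 (9*i+3*a+u) * r0 (9*i+3*a+v)) = (\<Sum>a<3. (if a = u then 1 else 0) * (if a = v then 1 else 0))"
        using u v lt by (intro sum.cong refl) (simp add: r0_def idx_dec)
      also have "\<dots> = (if u = v then 1 else 0)"
        using u v by (simp add: if_distrib[of "\<lambda>t. t * _"] sum.delta cong: if_cong) 
      finally show ?thesis .
    qed
    then show ?thesis by (auto simp: Cset_def)
  qed
  moreover have "r0 \<in> PiE UNIV (bx (9 * (n - 1)))"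
    by (auto simp: r0_def bx_def)
  ultimately show ?thesis by (auto simp: Kset_def)
qed




lemma ls_identity:
  fixes cs :: "nat \<Rightarrow> nat \<Rightarrow> real"
  assumes s: "\<forall>j<m. appQ m Q c j = lin k s cs j"
    and O: "\<And>i. i < k \<Longrightarrow> dt m (\<lambda>j. c j - appQ m Q c j) (cs i) = 0"
  shows "dt m (\<lambda>j. lin k t cs j - c j) (\<lambda>j. lin k t cs j - c j) =
     dt m (lin k (\<lambda>i. t i - s i) cs) (lin k (\<lambda>i. t i - s i) cs) + dt m (\<lambda>j. c j - appQ m Q c j) (\<lambda>j. c j - appQ m Q c j)"
proof -
  let ?L = "lin k (\<lambda>i. t i - s i) cs" and ?w = "\<lambda>j. c j - appQ m Q c j"
  have Lj: "lin k t cs j - c j = ?L j - ?w j" if "j < m" for j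
  proof -
    have "?L j = lin k t cs j - lin k s cs j"
      by (simp add: lin_def left_diff_distrib sum_subtractf)
    then show ?thesis using s that by simp
  qed
  have orth: "dt m ?L ?w = 0"
    using orth_lin[of k m ?w cs "\<lambda>i. t i - s i"] O dt_sym[of m ?L ?w] by simp
  have "dt m (\<lambda>j. lin k t cs j - c j) (\<lambda>j. lin k t cs j - c j) = dt m (\<lambda>j. ?L j - ?w j) (\<lambda>j. ?L j - ?w j)"
    using Lj by (intro dt_cong) auto
  also have "\<dots> = dt m ?L ?L - 2 * dt m ?L ?w + dt m ?w ?w"
    unfolding dt_def by (simp add: algebra_simps sum.distrib sum_subtractf sum_distrib_left)
  finally show ?thesis using orth by simp
qed

lemma dt_self_nonneg: "0 \<le> dt m u u"
  by (simp add: dt_def sum_nonneg)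


lemma cost_sum:
  fixes A :: "real mat"
  assumes A: "A \<in> carrier_mat m N" and x: "x \<in> carrier_vec N" and b: "b \<in> carrier_vec m"
  shows "primal_cost A b x y = (\<Sum>j<m. ((A *\<^sub>v x) $ j - y * b $ j) * ((A *\<^sub>v x) $ j - y * b $ j))"
proof -
  have Ax: "A *\<^sub>v x \<in> carrier_vec m" using A x by auto
  have "primal_cost A b x y = (\<Sum>j<m. (A *\<^sub>v x - y \<cdot>\<^sub>v b) $ j * (A *\<^sub>v x - y \<cdot>\<^sub>v b) $ j)"
    unfolding primal_cost_def Let_def using Ax b by (intro dot_sum) auto
  also have "\<dots> = (\<Sum>j<m. ((A *\<^sub>v x) $ j - y * b $ j) * ((A *\<^sub>v x) $ j - y * b $ j))"
    using Ax b by (intro sum.cong refl) auto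
  finally show ?thesis .
qed

lemma exists_opt:
  fixes A :: "real mat"
  assumes n: "n \<ge> 1" and A: "A \<in> carrier_mat m (pg_dim n)" and b: "b \<in> carrier_vec m"
  shows "\<exists>x. primal_optimal n A b x 1"
proof -
  define T where "T = 3 * (n - 1)"
  define R where "R = 9 * (n - 1)"
  have N: "pg_dim n = T + R" by (simp add: pg_dim_def T_def R_def)
  have rot: "rot_idx n i a c = T + (9*i+3*a+c)" for i a c by (simp add: rot_idx_def T_def)
  have rotlt: "9*i+3*a+c < R" if "i < n - 1" "a < 3" "c < 3" for i a c
    using that unfolding R_def by linarith
  define cs where "cs = (\<lambda>i j. A $$ (j, i))"
  define cf where "cf = (\<lambda>(r::nat\<Rightarrow>real) j. b $ j - (\<Sum>p<R. A $$ (j, T + p) * r p))"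
  obtain Q where Q: "\<And>c. \<exists>s. \<forall>j<m. appQ m Q c j = lin T s cs j"
    and O: "\<And>c i. i < T \<Longrightarrow> dt m (\<lambda>j. c j - appQ m Q c j) (cs i) = 0"
    using proj_exists[of m T cs] by blast
  define w where "w = (\<lambda>r j. cf r j - appQ m Q (cf r) j)"
  define h where "h = (\<lambda>r. dt m (w r) (w r))"
  have hcont: "continuous_on (Kset n) h"
    unfolding h_def w_def cf_def dt_def appQ_def by (intro continuous_intros)
  obtain rs where rs: "rs \<in> Kset n" and rsmin: "\<And>r. r \<in> Kset n \<Longrightarrow> h rs \<le> h r"
    using continuous_attains_inf[OF compact_Kset Kset_nonempty hcont] by blast
  obtain ss where ss: "\<forall>j<m. appQ m Q (cf rs) j = lin T ss cs j" using Q by blast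
  define rx where "rx = (\<lambda>x::real vec. \<lambda>p. if p < R then x $ (T + p) else 0)"
  have cost_lin: "primal_cost A b x 1 = dt m (\<lambda>j. lin T (\<lambda>p. x $ p) cs j - cf (rx x) j) (\<lambda>j. lin T (\<lambda>p. x $ p) cs j - cf (rx x) j)"
    if x: "x \<in> carrier_vec (pg_dim n)" for x
  proof -
    have "(A *\<^sub>v x) $ j - 1 * b $ j = lin T (\<lambda>p. x $ p) cs j - cf (rx x) j" if j: "j < m" for j
    proof -
      have "(A *\<^sub>v x) $ j = (\<Sum>p<T+R. A $$ (j,p) * x $ p)"
        using mv_idx[OF A x j] N by simp
      also have "\<dots> = lin T (\<lambda>p. x $ p) cs j + (\<Sum>p<R. A $$ (j, T + p) * x $ (T + p))"
        by (simp add: sum_split_add lin_def cs_def mult.commute)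
      also have "(\<Sum>p<R. A $$ (j, T + p) * x $ (T + p)) = (\<Sum>p<R. A $$ (j, T + p) * rx x p)"
        by (intro sum.cong refl) (simp add: rx_def)
      finally show ?thesis by (simp add: cf_def)
    qed
    then show ?thesis unfolding cost_sum[OF A x b] dt_def by (intro sum.cong refl) auto
  qed
  have hbound: "h (rx x) \<le> primal_cost A b x 1" if x: "x \<in> carrier_vec (pg_dim n)" for x
  proof -
    obtain s where s: "\<forall>j<m. appQ m Q (cf (rx x)) j = lin T s cs j" using Q by blast
    show ?thesis
      using ls_identity[OF s O, where t="\<lambda>p. x $ p"] dt_self_nonneg[of m "lin T (\<lambda>i. x $ i - s i) cs"]
      unfolding cost_lin[OF x] h_def w_def by linarith
  qed
  have feasK: "rx x \<in> Kset n" if f: "primal_feasible n x 1" for x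
  proof -
    have x: "x \<in> carrier_vec (pg_dim n)" using f by (simp add: primal_feasible_def)
    have C: "rx x \<in> Cset n"
    proof -
      have "(\<Sum>a<3. rx x (9*i+3*a+u) * rx x (9*i+3*a+v)) = (if u = v then 1 else 0)"
        if i: "i < n - 1" and u: "u < 3" and v: "v < 3" for i u v
      proof -
        have "(\<Sum>a<3. rx x (9*i+3*a+u) * rx x (9*i+3*a+v)) = (\<Sum>a<3. x $ (rot_idx n i a u) * x $ (rot_idx n i a v))"
          using rotlt[OF i _ u] rotlt[OF i _ v] by (intro sum.cong refl) (simp add: rx_def rot)
        also have "\<dots> = x \<bullet> (E_mat n i u v *\<^sub>v x)" by (rule E_qf[OF x i u v, symmetric])
        also have "\<dots> = (if u = v then 1 else 0)" using f i u v by (simp add: primal_feasible_def)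
        finally show ?thesis .
      qed
      then show ?thesis by (auto simp: Cset_def)
    qed
    moreover have "rx x \<in> PiE UNIV (bx R)"
    proof -
      have "rx x p \<in> bx R p" for p
      proof (cases "p < R")
        case True then show ?thesis using Cset_bound[OF C, of p] by (simp add: bx_def R_def)
      next
        case False then show ?thesis by (simp add: bx_def rx_def)
      qed
      then show ?thesis by auto
    qed
    ultimately show ?thesis by (simp add: Kset_def R_def)
  qed
  define xs where "xs = vec (pg_dim n) (\<lambda>p. if p < T then ss p else rs (p - T))"
  have xs: "xs \<in> carrier_vec (pg_dim n)" by (simp add: xs_def)
  have rsC: "rs \<in> Cset n" and rsB: "rs \<in> PiE UNIV (bx R)" using rs by (auto simp: Kset_def R_def)
  have rxs: "rx xs = rs"
  proof
    fix p show "rx xs p = rs p"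
    proof (cases "p < R")
      case True then show ?thesis by (simp add: rx_def xs_def N)
    next
      case False
      have "rs p \<in> bx R p" using rsB by auto
      then show ?thesis using False by (simp add: rx_def bx_def)
    qed
  qed
  have xsfeas: "primal_feasible n xs 1"
  proof -
    have "xs \<bullet> (E_mat n i u v *\<^sub>v xs) = (if u = v then 1 else 0)"
      if i: "i < n - 1" and u: "u < 3" and v: "v < 3" for i u v
    proof -
      have "xs \<bullet> (E_mat n i u v *\<^sub>v xs) = (\<Sum>a<3. xs $ (rot_idx n i a u) * xs $ (rot_idx n i a v))"
        by (rule E_qf[OF xs i u v])
      also have "\<dots> = (\<Sum>a<3. rs (9*i+3*a+u) * rs (9*i+3*a+v))"
        using rotlt[OF i _ u] rotlt[OF i _ v] by (intro sum.cong refl) (simp add: xs_def rot N)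
      also have "\<dots> = (if u = v then 1 else 0)" using rsC i u v by (simp add: Cset_def)
      finally show ?thesis .
    qed
    then show ?thesis using xs by (simp add: primal_feasible_def)
  qed
  have xscost: "primal_cost A b xs 1 = h rs"
  proof -
    have "primal_cost A b xs 1 = dt m (\<lambda>j. lin T (\<lambda>p. xs $ p) cs j - cf rs j) (\<lambda>j. lin T (\<lambda>p. xs $ p) cs j - cf rs j)"
      using cost_lin[OF xs] rxs by simp
    also have "lin T (\<lambda>p. xs $ p) cs = lin T ss cs"
      unfolding lin_def by (intro ext sum.cong refl) (simp add: xs_def N)
    also have "dt m (\<lambda>j. lin T ss cs j - cf rs j) (\<lambda>j. lin T ss cs j - cf rs j) = h rs"
      using ls_identity[OF ss O, where t=ss] unfolding h_def w_def by (simp add: dt_def lin_def)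
    finally show ?thesis .
  qed
  have neg: "primal_feasible n ((-1) \<cdot>\<^sub>v x) 1 \<and> primal_cost A b ((-1) \<cdot>\<^sub>v x) 1 = primal_cost A b x (-1)"
    if f: "primal_feasible n x (-1)" for x
  proof
    have x: "x \<in> carrier_vec (pg_dim n)" using f by (simp add: primal_feasible_def)
    have nx: "(-1) \<cdot>\<^sub>v x \<in> carrier_vec (pg_dim n)" using x by simp
    have "((-1) \<cdot>\<^sub>v x) \<bullet> (E_mat n i u v *\<^sub>v ((-1) \<cdot>\<^sub>v x)) = (if u = v then 1 else 0)"
      if i: "i < n - 1" and u: "u < 3" and v: "v < 3" for i u v
    proof -
      have lt: "rot_idx n i a c < pg_dim n" if "a < 3" "c < 3" for a c
        using rotlt[OF i that] N rot by simp
      have "((-1) \<cdot>\<^sub>v x) \<bullet> (E_mat n i u v *\<^sub>v ((-1) \<cdot>\<^sub>v x)) = (\<Sum>a<3. ((-1) \<cdot>\<^sub>v x) $ (rot_idx n i a u) * ((-1) \<cdot>\<^sub>v x) $ (rot_idx n i a v))"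
        by (rule E_qf[OF nx i u v])
      also have "\<dots> = (\<Sum>a<3. x $ (rot_idx n i a u) * x $ (rot_idx n i a v))"
        using lt u v x by (intro sum.cong refl) auto
      also have "\<dots> = x \<bullet> (E_mat n i u v *\<^sub>v x)" by (rule E_qf[OF x i u v, symmetric])
      also have "\<dots> = (if u = v then 1 else 0)" using f i u v by (simp add: primal_feasible_def)
      finally show ?thesis .
    qed
    then show "primal_feasible n ((-1) \<cdot>\<^sub>v x) 1" using nx by (simp add: primal_feasible_def)
    have Anx: "(A *\<^sub>v ((-1) \<cdot>\<^sub>v x)) $ j = - (A *\<^sub>v x) $ j" if "j < m" for j
      using A x that by (simp add: mult_mat_vec)
    show "primal_cost A b ((-1) \<cdot>\<^sub>v x) 1 = primal_cost A b x (-1)"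
      unfolding cost_sum[OF A nx b] cost_sum[OF A x b] by (intro sum.cong refl) (simp add: Anx algebra_simps)
  qed
  show ?thesis
  proof (intro exI[of _ xs])
    show "primal_optimal n A b xs 1"
      unfolding primal_optimal_def
    proof (intro conjI allI impI)
      show "primal_feasible n xs 1" by (rule xsfeas)
      fix x' y' assume f: "primal_feasible n x' y'"
      have "y' = 1 \<or> y' = -1" using f by (simp add: primal_feasible_def power2_eq_1_iff)
      then show "primal_cost A b xs 1 \<le> primal_cost A b x' y'"
      proof
        assume y: "y' = 1"
        have x': "x' \<in> carrier_vec (pg_dim n)" using f by (simp add: primal_feasible_def)
        have "h rs \<le> h (rx x')" using rsmin feasK f y by simp
        then show ?thesis using hbound[OF x'] xscost y by simp
      next
        assume y: "y' = -1"
        have f': "primal_feasible n ((-1) \<cdot>\<^sub>v x') 1" and c': "primal_cost A b ((-1) \<cdot>\<^sub>v x') 1 = primal_cost A b x' y'"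
          using neg f y by auto
        have x': "(-1) \<cdot>\<^sub>v x' \<in> carrier_vec (pg_dim n)" using f' by (simp add: primal_feasible_def)
        have "h rs \<le> h (rx ((-1) \<cdot>\<^sub>v x'))" using rsmin feasK[OF f'] by simp
        then show ?thesis using hbound[OF x'] xscost c' by simp
      qed
    qed
  qed
qed



lemma feas_identity:
  fixes A :: "real mat"
  assumes A: "A \<in> carrier_mat m (pg_dim n)" and b: "b \<in> carrier_vec m" and f: "primal_feasible n x y"
  shows "primal_cost A b x y = dual_objective n lam ly +
     zvec (pg_dim n) x y \<bullet> (M_mat n A b lam ly *\<^sub>v zvec (pg_dim n) x y)"
proof -
  have x: "x \<in> carrier_vec (pg_dim n)" and y: "y\<^sup>2 = 1" using f by (auto simp: primal_feasible_def)
  have "(\<Sum>i<n - 1. \<Sum>u<3. \<Sum>v<3. lam i u v * (x \<bullet> (E_mat n i u v *\<^sub>v x))) =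
        (\<Sum>i<n - 1. \<Sum>u<3::nat. \<Sum>v<3::nat. lam i u v * (if u = v then 1 else 0))"
    using f by (intro sum.cong refl) (auto simp: primal_feasible_def)
  also have "\<dots> = (\<Sum>i<n - 1. \<Sum>u<3. lam i u u)"
    by (simp add: if_distrib[of "\<lambda>t. _ * t"] cong: if_cong)
  finally show ?thesis using zMz[OF A x b, where lam=lam and ly=ly and y=y] y
    by (simp add: dual_objective_def)
qed

lemma weak_duality:
  fixes A :: "real mat"
  assumes A: "A \<in> carrier_mat m (pg_dim n)" and b: "b \<in> carrier_vec m"
    and psdM: "psd (M_mat n A b lam ly)" and f: "primal_feasible n x y"
  shows "dual_objective n lam ly \<le> primal_cost A b x y"
proof -
  have "x \<in> carrier_vec (pg_dim n)" using f by (simp add: primal_feasible_def)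
  then have "0 \<le> zvec (pg_dim n) x y \<bullet> (M_mat n A b lam ly *\<^sub>v zvec (pg_dim n) x y)"
    using psdM M_carrier[of n A b lam ly] zvec_carrier[of "pg_dim n" x y] by (auto simp: psd_def)
  then show ?thesis using feas_identity[OF A b f, where lam=lam and ly=ly] by simp
qed

lemma prop4_fwd:
  fixes A :: "real mat"
  assumes A: "A \<in> carrier_mat m (pg_dim n)" and b: "b \<in> carrier_vec m"
    and psdM: "psd (M_mat n A b lam ly)"
    and x0: "primal_optimal n A b x0 1" and c0: "primal_cost A b x0 1 = dual_objective n lam ly"
    and x: "x \<in> carrier_vec (pg_dim n)" and o: "primal_optimal n A b x 1"
  shows "primal_feasible n x 1 \<and> H_mat n A lam *\<^sub>v x = transpose_mat A *\<^sub>v b \<and>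
              b \<bullet> (A *\<^sub>v x) = b \<bullet> b - ly"
proof -
  let ?N = "pg_dim n" and ?M = "M_mat n A b lam ly" and ?d = "dual_objective n lam ly"
  let ?c = "transpose_mat A *\<^sub>v b"
  have f: "primal_feasible n x 1" using o by (simp add: primal_optimal_def)
  have "primal_cost A b x 1 \<le> primal_cost A b x0 1" using o x0 unfolding primal_optimal_def by blast
  then have "primal_cost A b x 1 \<le> ?d" using c0 by simp
  then have "primal_cost A b x 1 = ?d" using weak_duality[OF A b psdM f] by simp
  then have "zvec ?N x 1 \<bullet> (?M *\<^sub>v zvec ?N x 1) = 0" using feas_identity[OF A b f, where lam=lam and ly=ly] by simp
  then have Mz: "?M *\<^sub>v zvec ?N x 1 = 0\<^sub>v (?N + 1)"
    by (intro psd_kernel[OF M_carrier psdM zvec_carrier])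
  have top: "(H_mat n A lam *\<^sub>v x) $ p - ?c $ p = 0" if "p < ?N" for p
    using arg_cong[OF Mz, of "\<lambda>v. v $ p"] Mz_top[OF A x b that, where lam=lam and ly=ly and y=1] that by simp
  have bot: "- (?c \<bullet> x) + (b \<bullet> b - ly) = 0"
    using arg_cong[OF Mz, of "\<lambda>v. v $ ?N"] Mz_bot[OF A x b, where lam=lam and ly=ly and y=1] by simp
  have h: "H_mat n A lam *\<^sub>v x = ?c"
    using top A H_carrier[of n A lam] by (intro eq_vecI) auto
  have "b \<bullet> (A *\<^sub>v x) = b \<bullet> b - ly" using bot c_dot[OF A x b] by simp
  then show ?thesis using f h by simp
qed

lemma prop4_bwd:
  fixes A :: "real mat"
  assumes A: "A \<in> carrier_mat m (pg_dim n)" and b: "b \<in> carrier_vec m"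
    and psdM: "psd (M_mat n A b lam ly)"
    and x: "x \<in> carrier_vec (pg_dim n)"
    and h: "primal_feasible n x 1 \<and> H_mat n A lam *\<^sub>v x = transpose_mat A *\<^sub>v b \<and>
              b \<bullet> (A *\<^sub>v x) = b \<bullet> b - ly"
  shows "primal_optimal n A b x 1"
proof -
  let ?N = "pg_dim n" and ?M = "M_mat n A b lam ly" and ?d = "dual_objective n lam ly"
  have Mz: "?M *\<^sub>v zvec ?N x 1 = 0\<^sub>v (?N + 1)"
  proof (rule eq_vecI)
    show "dim_vec (?M *\<^sub>v zvec ?N x 1) = dim_vec (0\<^sub>v (?N + 1))"
      using M_carrier[of n A b lam ly] by simp
    fix p assume "p < dim_vec (0\<^sub>v (?N + 1))"
    then have p: "p < ?N + 1" by simp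
    show "(?M *\<^sub>v zvec ?N x 1) $ p = 0\<^sub>v (?N + 1) $ p"
    proof (cases "p < ?N")
      case True then show ?thesis using Mz_top[OF A x b True, where lam=lam and ly=ly and y=1] h by simp
    next
      case False then have "p = ?N" using p by simp
      then show ?thesis using Mz_bot[OF A x b, where lam=lam and ly=ly and y=1] h c_dot[OF A x b] by simp
    qed
  qed
  have "primal_cost A b x 1 = ?d"
    using feas_identity[OF A b conjunct1[OF h], where lam=lam and ly=ly] Mz zvec_carrier[of ?N x 1] by simp
  then show "primal_optimal n A b x 1"
    using h weak_duality[OF A b psdM] unfolding primal_optimal_def by auto
qed

theorem proposition4:
  fixes n m :: nat and A :: "real mat" and b :: "real vec"
    and lam :: "nat \<Rightarrow> nat \<Rightarrow> nat \<Rightarrow> real" and ly :: real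
  assumes "n \<ge> 1"
    and "A \<in> carrier_mat m (pg_dim n)" and "b \<in> carrier_vec m"
    and gap: "primal_value n A b - dual_value n A b = 0"
    and opt: "dual_optimal n A b lam ly"
  shows "(\<exists>x. primal_optimal n A b x 1) \<and>
         (\<forall>x \<in> carrier_vec (pg_dim n).
            primal_optimal n A b x 1 \<longleftrightarrow>
              primal_feasible n x 1 \<and>
              H_mat n A lam *\<^sub>v x = transpose_mat A *\<^sub>v b \<and>
              b \<bullet> (A *\<^sub>v x) = b \<bullet> b - ly)"
proof -
  note A = assms(2) and b = assms(3)
  have psdM: "psd (M_mat n A b lam ly)" using opt by (simp add: dual_optimal_def dual_feasible_def)
  have dv: "dual_value n A b = dual_objective n lam ly"
    unfolding dual_value_def using opt unfolding dual_optimal_def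
    by (intro cSup_eq_maximum) auto
  obtain x0 where x0: "primal_optimal n A b x0 1" using exists_opt[OF assms(1) A b] by blast
  have pv: "primal_value n A b = primal_cost A b x0 1"
    unfolding primal_value_def using x0 unfolding primal_optimal_def
    by (intro cInf_eq_minimum) auto
  have c0: "primal_cost A b x0 1 = dual_objective n lam ly" using gap pv dv by simp
  have "\<forall>x \<in> carrier_vec (pg_dim n).
            primal_optimal n A b x 1 \<longleftrightarrow>
              primal_feasible n x 1 \<and>
              H_mat n A lam *\<^sub>v x = transpose_mat A *\<^sub>v b \<and>
              b \<bullet> (A *\<^sub>v x) = b \<bullet> b - ly"
    using prop4_fwd[OF A b psdM x0 c0] prop4_bwd[OF A b psdM] by blast
  then show ?thesis using x0 by blast
qed

end
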